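(* Let $\Sigma$ be a finite non-empty alphabet, $V=\mathbb{R}^d$ with a fixed norm $|\cdot|_V$, $W=\mathbb{R}^N$ with a fixed norm $|\cdot|_W$, $\lambda>0$, and $\mathbf{h},\mathbf{g}\colon\Sigma^*\to V$. Then: (1) There exists a constant $c(\lambda)>0$ such that for every $\psi\in\mathrm{Aff}(V,W)$, $$d_{\infty,\Delta}(\mathrm{softmax}_\lambda\circ\psi\circ\mathbf{h},\ \mathcal{V}_N(\mathbf{g}))\le c(\lambda)\,\|\psi_{\mathrm{lin}}\|\ \inf_{\phi\in\mathrm{Aff}(V)}\|\mathbf{h}-\phi\circ\mathbf{g}\|_\infty.$$ (2) $d_{\mathcal{V}(V,\Delta)}(\mathbf{h},\mathbf{g})\le c(\lambda)\, d_{\mathrm{Aff}(V,W)}(\mathbf{h},\mathbf{g})$. (3) If $\inf_{\phi\in\mathrm{Aff}(V)}\|\mathbf{h}-\phi\circ\mathbf{g}\|_\infty=0$ then $d_{\mathrm{Aff}(V,W)}(\mathbf{h},\mathbf{g})=0$, and if $d_{\mathrm{Aff}(V,W)}(\mathbf{h},\mathbf{g})=0$ then $d_{\mathcal{V}(V,\Delta)}(\mathbf{h},\mathbf{g})=0$.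
   Context: $\mathrm{Aff}(V)$ is the group of invertible affine maps of $V$; $\mathrm{Aff}(V,W)$ is the set of affine maps $\psi(\mathbf{v})=\psi_{\mathrm{lin}}\mathbf{v}+\mathbf{b}$ with $\psi_{\mathrm{lin}}\colon V\to W$ linear and $\mathbf{b}\in W$; $\|\psi_{\mathrm{lin}}\|$ is its operator norm with respect to $|\cdot|_V,|\cdot|_W$. For maps into $V$, $\|\mathbf{f}\|_\infty=\sup_{\mathbf{y}\in\Sigma^*}|\mathbf{f}(\mathbf{y})|_V$; $d_{\infty,W}(\mathbf{f},\mathbf{f}')=\sup_{\mathbf{y}}|\mathbf{f}(\mathbf{y})-\mathbf{f}'(\mathbf{y})|_W$ for maps into $W$; $d_{\infty,\Delta}(p,q)=\sup_{\mathbf{y}}|p(\mathbf{y})-q(\mathbf{y})|_W$ for maps $p,q\colon\Sigma^*\to\Delta^{N-1}$ (the probability simplex in $\mathbb{R}^N$); all these take values in $[0,\infty]$. For a distance $d$, $d(x,E)=\inf_{y\in E}d(x,y)$ and $d^{\mathcal{H}}(E,E')=\sup_{x\in E}d(x,E')$. $\mathrm{softmax}_\lambda(\mathbf{x})_i=e^{\lambda x_i}/\sum_je^{\lambda x_j}$. Set $\mathrm{Aff}_{V,W}(\mathbf{h})=\{\psi\circ\mathbf{h}:\psi\in\mathrm{Aff}(V,W)\}$, $\mathcal{V}_N(\mathbf{h})=\{\mathrm{softmax}_\lambda\circ\psi\circ\mathbf{h}:\psi\in\mathrm{Aff}(V,W)\}$, $d_{\mathrm{Aff}(V,W)}(\mathbf{h},\mathbf{g})=d^{\mathcal{H}}_{\infty,W}(\mathrm{Aff}_{V,W}(\mathbf{h}),\mathrm{Aff}_{V,W}(\mathbf{g}))$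 and $d_{\mathcal{V}(V,\Delta)}(\mathbf{h},\mathbf{g})=d^{\mathcal{H}}_{\infty,\Delta}(\mathcal{V}_N(\mathbf{h}),\mathcal{V}_N(\mathbf{g}))$. *)

theory Defs
  imports "HOL-Analysis.Analysis"
begin

text \<open>A norm on a real vector space, given as a function (the paper fixes
  arbitrary norms on V = R^d and W = R^N).\<close>
definition is_norm :: "('v::real_vector \<Rightarrow> real) \<Rightarrow> bool" where
  "is_norm n \<longleftrightarrow> (\<forall>x. 0 \<le> n x) \<and> (\<forall>x. n x = 0 \<longleftrightarrow> x = 0)
     \<and> (\<forall>a x. n (a *\<^sub>R x) = \<bar>a\<bar> * n x) \<and> (\<forall>x y. n (x + y) \<le> n x + n y)"

definition op_norm :: "('v \<Rightarrow> real) \<Rightarrow> ('w \<Rightarrow> real) \<Rightarrow> ('v \<Rightarrow> 'w) \<Rightarrow> real" where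
  "op_norm nV nW L = Sup {nW (L v) | v. nV v \<le> 1}"

definition softmax :: "real \<Rightarrow> real^'n \<Rightarrow> real^'n" where
  "softmax lam x = (\<chi> i. exp (lam * x $ i) / (\<Sum>j\<in>UNIV. exp (lam * x $ j)))"

definition d_inf :: "('w::real_vector \<Rightarrow> real) \<Rightarrow> ('s \<Rightarrow> 'w) \<Rightarrow> ('s \<Rightarrow> 'w) \<Rightarrow> ereal" where
  "d_inf nW f f' = (SUP y. ereal (nW (f y - f' y)))"

definition sup_norm :: "('v \<Rightarrow> real) \<Rightarrow> ('s \<Rightarrow> 'v) \<Rightarrow> ereal" where
  "sup_norm nV f = (SUP y. ereal (nV (f y)))"

definition set_dist :: "('x \<Rightarrow> 'x \<Rightarrow> ereal) \<Rightarrow> 'x \<Rightarrow> 'x set \<Rightarrow> ereal" where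
  "set_dist d x E = (INF y\<in>E. d x y)"

definition hausdorff :: "('x \<Rightarrow> 'x \<Rightarrow> ereal) \<Rightarrow> 'x set \<Rightarrow> 'x set \<Rightarrow> ereal" where
  "hausdorff d E E' = (SUP x\<in>E. set_dist d x E')"

text \<open>Aff(V,W): affine maps v \<mapsto> L v + b with L linear, represented by (L, b).
  Aff(V): invertible affine maps of V.\<close>
definition Aff :: "(('v::real_vector \<Rightarrow> 'w::real_vector) \<times> 'w) set" where
  "Aff = {(L, b). linear L}"

definition Aff_inv :: "(('v::real_vector \<Rightarrow> 'v) \<times> 'v) set" where
  "Aff_inv = {(A, b). linear A \<and> bij A}"

definition aff_app :: "('v \<Rightarrow> 'w) \<times> 'w \<Rightarrow> 'v \<Rightarrow> 'w::plus" where
  "aff_app \<psi> v = fst \<psi> v + snd \<psi>"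

definition Aff_of :: "('s \<Rightarrow> 'v::real_vector) \<Rightarrow> ('s \<Rightarrow> 'w::real_vector) set" where
  "Aff_of h = {aff_app \<psi> \<circ> h | \<psi>. \<psi> \<in> Aff}"

definition V_of :: "real \<Rightarrow> ('s \<Rightarrow> 'v::real_vector) \<Rightarrow> ('s \<Rightarrow> real^'n) set" where
  "V_of lam h = {softmax lam \<circ> aff_app \<psi> \<circ> h | \<psi>. \<psi> \<in> Aff}"

definition d_Aff :: "(real^'n \<Rightarrow> real) \<Rightarrow> ('s \<Rightarrow> 'v::real_vector) \<Rightarrow> ('s \<Rightarrow> 'v) \<Rightarrow> ereal" where
  "d_Aff nW h g = hausdorff (d_inf nW) (Aff_of h) (Aff_of g)"

definition d_V :: "(real^'n \<Rightarrow> real) \<Rightarrow> real \<Rightarrow> ('s \<Rightarrow> 'v::real_vector) \<Rightarrow> ('s \<Rightarrow> 'v) \<Rightarrow> ereal" where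
  "d_V nW lam h g = hausdorff (d_inf nW) (V_of lam h) (V_of lam g)"

definition aff_gap :: "('v::real_vector \<Rightarrow> real) \<Rightarrow> ('s \<Rightarrow> 'v) \<Rightarrow> ('s \<Rightarrow> 'v) \<Rightarrow> ereal" where
  "aff_gap nV h g = (INF \<phi>\<in>Aff_inv. sup_norm nV (\<lambda>y. h y - aff_app \<phi> (g y)))"

end

theory Submission imports Defs begin

lemma norm_sum_le:
  assumes "is_norm n" "finite S"
  shows "n (sum f S) \<le> (\<Sum>i\<in>S. n (f i))"
  using assms(2)
proof (induction S rule: finite_induct)
  case empty
  have "n 0 = 0" using assms(1) unfolding is_norm_def by blast
  then show ?case by simp
next
  case (insert x F)
  have "n (f x + sum f F) \<le> n (f x) + n (sum f F)" using assms(1) unfolding is_norm_def by blast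
  then show ?case using insert by simp
qed

lemma norm_upper:
  fixes n :: "'a::euclidean_space \<Rightarrow> real"
  assumes "is_norm n"
  shows "\<exists>B>0. \<forall>x. n x \<le> B * norm x"
proof -
  have nn: "\<And>x. 0 \<le> n x" and sc: "\<And>a x. n (a *\<^sub>R x) = \<bar>a\<bar> * n x"
    using assms unfolding is_norm_def by blast+
  define B where "B = (\<Sum>b\<in>Basis. n b) + 1"
  have B0: "B > 0" unfolding B_def using nn by (simp add: add_nonneg_pos sum_nonneg)
  have "n x \<le> B * norm x" for x
  proof -
    have "n x = n (\<Sum>b\<in>Basis. (x \<bullet> b) *\<^sub>R b)" by (simp add: euclidean_representation)
    also have "\<dots> \<le> (\<Sum>b\<in>Basis. n ((x \<bullet> b) *\<^sub>R b))" by (rule norm_sum_le[OF assms]) simp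
    also have "\<dots> = (\<Sum>b\<in>Basis. \<bar>x \<bullet> b\<bar> * n b)" by (simp add: sc)
    also have "\<dots> \<le> (\<Sum>b\<in>Basis. norm x * n b)"
      by (rule sum_mono) (simp add: mult_right_mono nn Basis_le_norm)
    also have "\<dots> = norm x * (\<Sum>b\<in>Basis. n b)" by (simp add: sum_distrib_left)
    also have "\<dots> \<le> B * norm x" unfolding B_def by (simp add: algebra_simps)
    finally show ?thesis .
  qed
  then show ?thesis using B0 by blast
qed

lemma norm_lower:
  fixes n :: "'a::euclidean_space \<Rightarrow> real"
  assumes "is_norm n"
  shows "\<exists>a>0. \<forall>x. a * norm x \<le> n x"
proof -
  have nn: "\<And>x. 0 \<le> n x" and z: "\<And>x. n x = 0 \<longleftrightarrow> x = 0" and sc: "\<And>a x. n (a *\<^sub>R x) = \<bar>a\<bar> * n x"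
    and tr: "\<And>x y. n (x + y) \<le> n x + n y"
    using assms unfolding is_norm_def by blast+
  obtain B where B: "B > 0" "\<And>x. n x \<le> B * norm x" using norm_upper[OF assms] by blast
  have lip: "\<bar>n x - n y\<bar> \<le> B * norm (x - y)" for x y
  proof -
    have "n x \<le> n y + n (x - y)" using tr[of y "x - y"] by simp
    moreover have "n y \<le> n x + n (y - x)" using tr[of x "y - x"] by simp
    moreover have "n (y - x) = n (x - y)" using sc[of "-1" "x - y"] by simp
    ultimately show ?thesis using B(2)[of "x - y"] by linarith
  qed
  have cont: "continuous_on (sphere 0 1) n"
  proof (rule continuous_on_iff[THEN iffD2], intro ballI allI impI)
    fix x e assume "(e::real) > 0"
    show "\<exists>d>0. \<forall>x'\<in>sphere 0 1. dist x' x < d \<longrightarrow> dist (n x') (n x) < e"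
    proof (intro exI[of _ "e / B"] conjI ballI impI)
      show "e / B > 0" using \<open>e > 0\<close> B by simp
      fix x' assume "x' \<in> sphere (0::'a) 1" "dist x' x < e / B"
      then have "B * norm (x' - x) < e" using B by (simp add: dist_norm field_simps)
      then show "dist (n x') (n x) < e" using lip[of x' x] by (simp add: dist_real_def)
    qed
  qed
  have ne: "sphere (0::'a) 1 \<noteq> {}" by simp
  obtain u where u: "u \<in> sphere 0 1" "\<And>y. y \<in> sphere 0 1 \<Longrightarrow> n u \<le> n y"
    using continuous_attains_inf[OF compact_sphere ne cont] by blast
  have u0: "n u > 0" using u(1) z[of u] nn[of u] by auto
  have "n u * norm x \<le> n x" for x
  proof (cases "x = 0")
    case True then show ?thesis using nn by simp
  next
    case False
    have "n u \<le> n ((1 / norm x) *\<^sub>R x)" using u(2) False by simp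
    also have "\<dots> = n x / norm x" using sc by simp
    finally show ?thesis using False by (simp add: field_simps)
  qed
  then show ?thesis using u0 by blast
qed


lemma sm_comp_le:
  fixes x y :: "real^'n"
  assumes lam: "lam > 0" and d: "\<And>j. \<bar>x $ j - y $ j\<bar> \<le> \<delta>"
  shows "softmax lam x $ i - softmax lam y $ i \<le> 4 * lam * \<delta>"
proof -
  define Sx where "Sx = (\<Sum>j\<in>UNIV. exp (lam * x $ j))"
  define Sy where "Sy = (\<Sum>j\<in>UNIV. exp (lam * y $ j))"
  have Sx0: "Sx > 0" unfolding Sx_def by (simp add: sum_pos)
  have Sy0: "Sy > 0" unfolding Sy_def by (simp add: sum_pos)
  have d0: "\<delta> \<ge> 0" using d[of i] by linarith
  have sx: "softmax lam x $ i = exp (lam * x $ i) / Sx" unfolding softmax_def Sx_def by simp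
  have sy: "softmax lam y $ i = exp (lam * y $ i) / Sy" unfolding softmax_def Sy_def by simp
  have le1: "exp (lam * x $ i) \<le> Sx" unfolding Sx_def
    by (rule member_le_sum) auto
  have sx1: "softmax lam x $ i \<le> 1" using sx le1 Sx0 by simp
  have sy0: "softmax lam y $ i \<ge> 0" using sy Sy0 by simp
  have le1y: "exp (lam * y $ i) \<le> Sy" unfolding Sy_def
    by (rule member_le_sum) auto
  have sy1: "softmax lam y $ i \<le> 1" using sy le1y Sy0 by simp
  have num: "exp (lam * x $ i) \<le> exp (lam * y $ i) * exp (lam * \<delta>)"
  proof -
    have "lam * x $ i \<le> lam * y $ i + lam * \<delta>"
      using d[of i] lam by (simp add: abs_le_iff right_diff_distrib[symmetric] distrib_left[symmetric] mult_left_mono)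
    then show ?thesis by (simp add: exp_add[symmetric])
  qed
  have den: "Sy * exp (- (lam * \<delta>)) \<le> Sx"
  proof -
    have "exp (lam * y $ j) * exp (- (lam * \<delta>)) \<le> exp (lam * x $ j)" for j
    proof -
      have "lam * y $ j - lam * \<delta> \<le> lam * x $ j"
        using d[of j] lam by (simp add: abs_le_iff right_diff_distrib[symmetric] distrib_left[symmetric] mult_left_mono)
      then show ?thesis by (simp add: exp_add[symmetric])
    qed
    then show ?thesis unfolding Sx_def Sy_def sum_distrib_right by (rule sum_mono)
  qed
  define t where "t = 2 * lam * \<delta>"
  have t0: "t \<ge> 0" unfolding t_def using lam d0 by simp
  have "softmax lam x $ i \<le> softmax lam y $ i * exp t"
  proof -
    have "softmax lam x $ i \<le> exp (lam * y $ i) * exp (lam * \<delta>) / (Sy * exp (- (lam * \<delta>)))"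
      unfolding sx using num den Sx0 Sy0
      by (meson divide_left_mono dual_order.trans exp_gt_zero mult_pos_pos order_less_le divide_right_mono)
    also have "\<dots> = softmax lam y $ i * exp t"
      unfolding sy t_def by (simp add: exp_minus exp_add[symmetric] field_simps)
    finally show ?thesis .
  qed
  then have "softmax lam x $ i - softmax lam y $ i \<le> softmax lam y $ i * (exp t - 1)"
    by (simp add: algebra_simps)
  also have "\<dots> \<le> exp t - 1" using sy0 sy1 t0
    by (simp add: mult_left_le_one_le)
  finally have A1: "softmax lam x $ i - softmax lam y $ i \<le> exp t - 1" .
  have A2: "softmax lam x $ i - softmax lam y $ i \<le> 1" using sx1 sy0 by simp
  show ?thesis
  proof (cases "t \<le> 1/2")
    case True
    then have "exp t \<le> 1 + 2 * t" using real_exp_bound_lemma t0 by blast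
    then show ?thesis using A1 unfolding t_def by simp
  next
    case False
    then show ?thesis using A2 unfolding t_def by simp
  qed
qed

lemma sm_lip_eucl:
  fixes x y :: "real^'n"
  assumes lam: "lam > 0"
  shows "norm (softmax lam x - softmax lam y) \<le> (real CARD('n) * 4 * lam) * norm (x - y)"
proof -
  have d: "\<And>j. \<bar>x $ j - y $ j\<bar> \<le> norm (x - y)"
    by (metis component_le_norm_cart vector_minus_component)
  have d': "\<And>j. \<bar>y $ j - x $ j\<bar> \<le> norm (x - y)"
    by (metis abs_minus_commute d)
  have c: "\<bar>softmax lam x $ i - softmax lam y $ i\<bar> \<le> 4 * lam * norm (x - y)" for i
    using sm_comp_le[OF lam d, of i] sm_comp_le[OF lam d', of i] by linarith
  have "norm (softmax lam x - softmax lam y) \<le> (\<Sum>i\<in>UNIV. \<bar>(softmax lam x - softmax lam y) $ i\<bar>)"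
    by (rule norm_le_l1_cart)
  also have "\<dots> \<le> (\<Sum>i\<in>(UNIV::'n set). 4 * lam * norm (x - y))"
    by (rule sum_mono) (use c in simp)
  also have "\<dots> = (real CARD('n) * 4 * lam) * norm (x - y)" by simp
  finally show ?thesis .
qed

lemma sm_lip:
  fixes nW :: "real^'n \<Rightarrow> real"
  assumes "is_norm nW" "lam > 0"
  shows "\<exists>c>0. \<forall>x y. nW (softmax lam x - softmax lam y) \<le> c * nW (x - y)"
proof -
  obtain B where B: "B > 0" "\<And>x. nW x \<le> B * norm x" using norm_upper[OF assms(1)] by blast
  obtain a where a: "a > 0" "\<And>x. a * norm x \<le> nW x" using norm_lower[OF assms(1)] by blast
  define K where "K = real CARD('n) * 4 * lam"
  have K: "K > 0" unfolding K_def using assms(2) by simp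
  have "nW (softmax lam x - softmax lam y) \<le> (B * K / a) * nW (x - y)" for x y
  proof -
    have "nW (softmax lam x - softmax lam y) \<le> B * norm (softmax lam x - softmax lam y)" by (rule B(2))
    also have "\<dots> \<le> B * (K * norm (x - y))"
      using sm_lip_eucl[OF assms(2), of x y] B(1) unfolding K_def by simp
    also have "\<dots> \<le> B * (K * (nW (x - y) / a))"
      using a(2)[of "x - y"] a(1) B(1) K by (simp add: field_simps)
    also have "\<dots> = (B * K / a) * nW (x - y)" by simp
    finally show ?thesis .
  qed
  moreover have "B * K / a > 0" using B a K by simp
  ultimately show ?thesis by blast
qed


lemma op_norm_props:
  fixes nV :: "real^'d \<Rightarrow> real" and nW :: "real^'n \<Rightarrow> real" and L :: "real^'d \<Rightarrow> real^'n"
  assumes V: "is_norm nV" and W: "is_norm nW" and L: "linear L"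
  shows "0 \<le> op_norm nV nW L" "\<And>v. nW (L v) \<le> op_norm nV nW L * nV v"
proof -
  have nnW: "\<And>x. 0 \<le> nW x" and zW: "\<And>x. nW x = 0 \<longleftrightarrow> x = 0"
    and scW: "\<And>a x. nW (a *\<^sub>R x) = \<bar>a\<bar> * nW x"
    using W unfolding is_norm_def by blast+
  have nnV: "\<And>x. 0 \<le> nV x" and zV: "\<And>x. nV x = 0 \<longleftrightarrow> x = 0"
    and scV: "\<And>a x. nV (a *\<^sub>R x) = \<bar>a\<bar> * nV x"
    using V unfolding is_norm_def by blast+
  obtain B where B: "B > 0" "\<And>x. nW x \<le> B * norm x" using norm_upper[OF W] by blast
  obtain a where a: "a > 0" "\<And>x. a * norm x \<le> nV x" using norm_lower[OF V] by blast
  obtain K where K: "K > 0" "\<And>x. norm (L x) \<le> K * norm x" using linear_bounded_pos[OF L] by blast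
  define S where "S = {nW (L v) | v. nV v \<le> 1}"
  have bdd: "bdd_above S"
  proof (rule bdd_aboveI)
    fix s assume "s \<in> S"
    then obtain v where v: "s = nW (L v)" "nV v \<le> 1" unfolding S_def by blast
    have "norm v \<le> 1 / a" using a(2)[of v] v(2) a(1) by (simp add: field_simps)
    have "s \<le> B * norm (L v)" using v B(2) by simp
    also have "\<dots> \<le> B * (K * norm v)" using K(2)[of v] B(1) by simp
    also have "\<dots> \<le> B * (K * (1 / a))"
      using \<open>norm v \<le> 1 / a\<close> B(1) K(1) by (intro mult_left_mono) auto
    finally show "s \<le> B * (K * (1 / a))" .
  qed
  have L0: "L 0 = 0" using L by (rule linear_0)
  have zin: "0 \<in> S" unfolding S_def
  proof (intro CollectI exI conjI)
    show "0 = nW (L 0)" using L0 zW[of 0] by simp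
    show "nV 0 \<le> 1" using zV[of 0] by simp
  qed
  show o0: "0 \<le> op_norm nV nW L" unfolding op_norm_def S_def[symmetric]
    using cSup_upper[OF zin bdd] .
  fix v
  show "nW (L v) \<le> op_norm nV nW L * nV v"
  proof (cases "v = 0")
    case True then show ?thesis using L0 zW[of 0] zV[of 0] by simp
  next
    case False
    then have p: "nV v > 0" using nnV[of v] zV[of v] by auto
    define w where "w = (1 / nV v) *\<^sub>R v"
    have "nV w = 1" unfolding w_def scV using p by simp
    then have "nW (L w) \<in> S" unfolding S_def by force
    then have "nW (L w) \<le> op_norm nV nW L" unfolding op_norm_def S_def[symmetric]
      using cSup_upper[OF _ bdd] by blast
    moreover have "nW (L w) = nW (L v) / nV v"
      unfolding w_def using p by (simp add: linear_scale[OF L] scW)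
    ultimately show ?thesis using p by (simp add: field_simps)
  qed
qed

lemma ereal_INF_mult:
  fixes k :: real and X :: ereal
  assumes "k \<ge> 0" "S \<noteq> {}" "\<And>y. y \<in> S \<Longrightarrow> X \<le> ereal k * F y"
  shows "X \<le> ereal k * (INF y\<in>S. F y)"
proof (cases "k = 0")
  case True
  obtain y where "y \<in> S" using assms(2) by blast
  then show ?thesis using assms(3)[of y] True by (simp add: zero_ereal_def[symmetric])
next
  case False
  then have kp: "ereal k > 0" "ereal k \<noteq> \<infinity>" using assms(1) by auto
  have "X / ereal k \<le> (INF y\<in>S. F y)"
    by (rule INF_greatest) (use assms(3) ereal_divide_le_pos[OF kp] in blast)
  then show ?thesis using ereal_divide_le_pos[OF kp] by blast
qed

lemma ereal_SUP_mult:
  assumes "k \<ge> 0" "\<And>y. f y \<le> k * a y"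
  shows "(SUP y. ereal (f y)) \<le> ereal k * (SUP y. ereal (a y))"
proof (rule SUP_least)
  fix y
  have "ereal (f y) \<le> ereal k * ereal (a y)" using assms(2)[of y] by simp
  also have "\<dots> \<le> ereal k * (SUP y. ereal (a y))"
    by (rule ereal_mult_left_mono) (auto intro: SUP_upper simp: assms(1))
  finally show "ereal (f y) \<le> ereal k * (SUP y. ereal (a y))" .
qed

lemma gap_bound:
  fixes nV :: "real^'d \<Rightarrow> real" and nW :: "real^'n \<Rightarrow> real"
    and T :: "real^'n \<Rightarrow> 'w::real_vector" and nT :: "'w \<Rightarrow> real"
    and h g :: "'s \<Rightarrow> real^'d" and \<psi> :: "(real^'d \<Rightarrow> real^'n) \<times> (real^'n)"
  assumes V: "is_norm nV" and W: "is_norm nW" and C: "C \<ge> 0"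
    and T: "\<And>x y. nT (T x - T y) \<le> C * nW (x - y)" and \<psi>: "\<psi> \<in> Aff"
  shows "set_dist (d_inf nT) (T \<circ> aff_app \<psi> \<circ> h) {T \<circ> aff_app \<psi>' \<circ> g | \<psi>'. \<psi>' \<in> Aff}
    \<le> ereal (C * op_norm nV nW (fst \<psi>)) * aff_gap nV h g"
proof -
  obtain L b where Lb: "\<psi> = (L, b)" by (cases \<psi>)
  have L: "linear L" using \<psi> Lb unfolding Aff_def by simp
  note op = op_norm_props[OF V W L]
  define k where "k = C * op_norm nV nW L"
  have k0: "k \<ge> 0" unfolding k_def using C op(1) by simp
  show ?thesis unfolding aff_gap_def Lb fst_conv k_def[symmetric]
  proof (rule ereal_INF_mult[OF k0])
    have "(id, 0) \<in> Aff_inv" unfolding Aff_inv_def by (simp add: linear_id)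
    then show "Aff_inv \<noteq> {}" by blast
  next
    fix \<phi> assume "\<phi> \<in> (Aff_inv :: ((real^'d \<Rightarrow> real^'d) \<times> (real^'d)) set)"
    then obtain A a where Aa: "\<phi> = (A, a)" "linear A" unfolding Aff_inv_def by auto
    define \<psi>' where "\<psi>' = (L \<circ> A, L a + b)"
    have "\<psi>' \<in> Aff" unfolding \<psi>'_def Aff_def using linear_compose[OF Aa(2) L] by simp
    then have mem: "T \<circ> aff_app \<psi>' \<circ> g \<in> {T \<circ> aff_app \<psi>' \<circ> g | \<psi>'. \<psi>' \<in> Aff}" by blast
    have "set_dist (d_inf nT) (T \<circ> aff_app (L, b) \<circ> h) {T \<circ> aff_app \<psi>' \<circ> g | \<psi>'. \<psi>' \<in> Aff}
        \<le> d_inf nT (T \<circ> aff_app (L, b) \<circ> h) (T \<circ> aff_app \<psi>' \<circ> g)"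
      unfolding set_dist_def by (rule INF_lower[OF mem])
    also have "\<dots> \<le> ereal k * sup_norm nV (\<lambda>y. h y - aff_app \<phi> (g y))"
      unfolding d_inf_def sup_norm_def
    proof (rule ereal_SUP_mult[OF k0])
      fix y
      have eq: "aff_app (L, b) (h y) - aff_app \<psi>' (g y) = L (h y - aff_app \<phi> (g y))"
        unfolding aff_app_def \<psi>'_def Aa(1) by (simp add: linear_diff[OF L] linear_add[OF L])
      have "nT ((T \<circ> aff_app (L, b) \<circ> h) y - (T \<circ> aff_app \<psi>' \<circ> g) y)
          \<le> C * nW (L (h y - aff_app \<phi> (g y)))" using T[of "aff_app (L, b) (h y)" "aff_app \<psi>' (g y)"] eq by simp
      also have "\<dots> \<le> C * (op_norm nV nW L * nV (h y - aff_app \<phi> (g y)))"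
        using op(2) C by (simp add: mult_left_mono)
      finally show "nT ((T \<circ> aff_app (L, b) \<circ> h) y - (T \<circ> aff_app \<psi>' \<circ> g) y)
          \<le> k * nV (h y - aff_app \<phi> (g y))" unfolding k_def by simp
    qed
    finally show "set_dist (d_inf nT) (T \<circ> aff_app (L, b) \<circ> h) {T \<circ> aff_app \<psi>' \<circ> g | \<psi>'. \<psi>' \<in> Aff}
        \<le> ereal k * sup_norm nV (\<lambda>y. h y - aff_app \<phi> (g y))" .
  qed
qed


lemma d_inf_nonneg: "is_norm n \<Longrightarrow> 0 \<le> d_inf n f f'"
  unfolding d_inf_def is_norm_def
  by (rule order_trans[OF _ SUP_upper[OF UNIV_I]]) auto

lemma set_dist_nonneg: "is_norm n \<Longrightarrow> 0 \<le> set_dist (d_inf n) x E"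
  unfolding set_dist_def by (rule INF_greatest) (rule d_inf_nonneg)

lemma hausdorff_nonneg: "is_norm n \<Longrightarrow> E \<noteq> {} \<Longrightarrow> 0 \<le> hausdorff (d_inf n) E E'"
  unfolding hausdorff_def
  by (metis SUP_upper all_not_in_conv order_trans set_dist_nonneg)

lemma part2_pt:
  fixes nW :: "real^'n \<Rightarrow> real" and h g :: "'s \<Rightarrow> real^'d"
  assumes c: "c > 0" "\<And>x y. nW (softmax lam x - softmax lam y) \<le> c * nW (x - y)"
    and \<psi>: "\<psi> \<in> (Aff :: ((real^'d \<Rightarrow> real^'n) \<times> (real^'n)) set)"
  shows "set_dist (d_inf nW) (softmax lam \<circ> aff_app \<psi> \<circ> h) (V_of lam g)
     \<le> ereal c * set_dist (d_inf nW) (aff_app \<psi> \<circ> h) (Aff_of g :: ('s \<Rightarrow> real^'n) set)"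
  unfolding set_dist_def
proof (rule ereal_INF_mult)
  show "0 \<le> c" using c by simp
  have "aff_app ((\<lambda>_. 0)::real^'d \<Rightarrow> real^'n, 0) \<circ> g \<in> Aff_of g"
    unfolding Aff_of_def Aff_def by (auto simp: linear_0 module_hom_zero)
  then show "(Aff_of g :: ('s \<Rightarrow> real^'n) set) \<noteq> {}" by blast
next
  fix f' assume "f' \<in> (Aff_of g :: ('s \<Rightarrow> real^'n) set)"
  then obtain \<psi>' where \<psi>': "f' = aff_app \<psi>' \<circ> g" "\<psi>' \<in> (Aff :: ((real^'d \<Rightarrow> real^'n) \<times> (real^'n)) set)"
    unfolding Aff_of_def by blast
  have mem: "softmax lam \<circ> aff_app \<psi>' \<circ> g \<in> V_of lam g" unfolding V_of_def using \<psi>'(2) by blast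
  have "(INF f\<in>V_of lam g. d_inf nW (softmax lam \<circ> aff_app \<psi> \<circ> h) f)
      \<le> d_inf nW (softmax lam \<circ> aff_app \<psi> \<circ> h) (softmax lam \<circ> aff_app \<psi>' \<circ> g)"
    by (rule INF_lower[OF mem])
  also have "\<dots> \<le> ereal c * d_inf nW (aff_app \<psi> \<circ> h) f'"
    unfolding d_inf_def \<psi>'(1)
    by (rule ereal_SUP_mult) (use c in auto)
  finally show "(INF f\<in>V_of lam g. d_inf nW (softmax lam \<circ> aff_app \<psi> \<circ> h) f)
      \<le> ereal c * d_inf nW (aff_app \<psi> \<circ> h) f'" .
qed

theorem mainTheorem4:
  fixes nV :: "real^'d \<Rightarrow> real" and nW :: "real^'n \<Rightarrow> real" and lam :: real
  assumes "is_norm nV" and "is_norm nW" and "lam > 0"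
  shows "\<exists>c>0. \<forall>(h :: 'a::finite list \<Rightarrow> real^'d) g.
      (\<forall>\<psi> \<in> (Aff :: ((real^'d \<Rightarrow> real^'n) \<times> (real^'n)) set).
         set_dist (d_inf nW) (softmax lam \<circ> aff_app \<psi> \<circ> h) (V_of lam g)
           \<le> ereal (c * op_norm nV nW (fst \<psi>)) * aff_gap nV h g)
    \<and> d_V nW lam h g \<le> ereal c * d_Aff nW h g
    \<and> (aff_gap nV h g = 0 \<longrightarrow> d_Aff nW h g = 0)
    \<and> (d_Aff nW h g = 0 \<longrightarrow> d_V nW lam h g = 0)"
proof -
  obtain c where c: "c > 0" "\<And>x y. nW (softmax lam x - softmax lam y) \<le> c * nW (x - y)"
    using sm_lip[OF assms(2,3)] by blast
  have ne_Aff: "(Aff_of h :: ('a list \<Rightarrow> real^'n) set) \<noteq> {}" for h :: "'a list \<Rightarrow> real^'d"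
  proof -
    have "aff_app ((\<lambda>_. 0)::real^'d \<Rightarrow> real^'n, 0) \<circ> h \<in> Aff_of h"
      unfolding Aff_of_def Aff_def by (auto simp: linear_0 module_hom_zero)
    then show ?thesis by blast
  qed
  have ne_V: "(V_of lam h :: ('a list \<Rightarrow> real^'n) set) \<noteq> {}" for h :: "'a list \<Rightarrow> real^'d"
  proof -
    have "softmax lam \<circ> aff_app ((\<lambda>_. 0)::real^'d \<Rightarrow> real^'n, 0) \<circ> h \<in> V_of lam h"
      unfolding V_of_def Aff_def by (auto simp: linear_0 module_hom_zero)
    then show ?thesis by blast
  qed
  have P2: "d_V nW lam h g \<le> ereal c * d_Aff nW h g" for h g :: "'a list \<Rightarrow> real^'d"
    unfolding d_V_def hausdorff_def
  proof (rule SUP_least)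
    fix f assume "f \<in> (V_of lam h :: ('a list \<Rightarrow> real^'n) set)"
    then obtain \<psi> where \<psi>: "f = softmax lam \<circ> aff_app \<psi> \<circ> h" "\<psi> \<in> (Aff :: ((real^'d \<Rightarrow> real^'n) \<times> (real^'n)) set)"
      unfolding V_of_def by blast
    have memA: "aff_app \<psi> \<circ> h \<in> Aff_of h" unfolding Aff_of_def using \<psi>(2) by blast
    have "set_dist (d_inf nW) f (V_of lam g)
        \<le> ereal c * set_dist (d_inf nW) (aff_app \<psi> \<circ> h) (Aff_of g :: ('a list \<Rightarrow> real^'n) set)"
      unfolding \<psi>(1) by (rule part2_pt[OF c \<psi>(2)])
    also have "\<dots> \<le> ereal c * d_Aff nW h g"
      unfolding d_Aff_def hausdorff_def
      by (rule ereal_mult_left_mono) (use c SUP_upper[OF memA] in auto)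
    finally show "set_dist (d_inf nW) f (V_of lam g) \<le> ereal c * d_Aff nW h g" .
  qed
  have "(\<forall>\<psi> \<in> (Aff :: ((real^'d \<Rightarrow> real^'n) \<times> (real^'n)) set).
         set_dist (d_inf nW) (softmax lam \<circ> aff_app \<psi> \<circ> h) (V_of lam g)
           \<le> ereal (c * op_norm nV nW (fst \<psi>)) * aff_gap nV h g)
    \<and> d_V nW lam h g \<le> ereal c * d_Aff nW h g
    \<and> (aff_gap nV h g = 0 \<longrightarrow> d_Aff nW h g = 0)
    \<and> (d_Aff nW h g = 0 \<longrightarrow> d_V nW lam h g = 0)" for h g :: "'a list \<Rightarrow> real^'d"
  proof (intro conjI ballI impI)
    fix \<psi> assume \<psi>: "\<psi> \<in> (Aff :: ((real^'d \<Rightarrow> real^'n) \<times> (real^'n)) set)"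
    show "set_dist (d_inf nW) (softmax lam \<circ> aff_app \<psi> \<circ> h) (V_of lam g)
           \<le> ereal (c * op_norm nV nW (fst \<psi>)) * aff_gap nV h g"
      unfolding V_of_def
      by (rule gap_bound[OF assms(1,2) _ c(2) \<psi>]) (use c in simp)
  next
    show "d_V nW lam h g \<le> ereal c * d_Aff nW h g" by (rule P2)
  next
    assume gap: "aff_gap nV h g = 0"
    have "d_Aff nW h g \<le> 0"
      unfolding d_Aff_def hausdorff_def
    proof (rule SUP_least)
      fix f assume "f \<in> (Aff_of h :: ('a list \<Rightarrow> real^'n) set)"
      then obtain \<psi> where \<psi>: "f = aff_app \<psi> \<circ> h" "\<psi> \<in> (Aff :: ((real^'d \<Rightarrow> real^'n) \<times> (real^'n)) set)"
        unfolding Aff_of_def by blast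
      have eqs: "Aff_of g = {id \<circ> aff_app \<psi>' \<circ> g | \<psi>'. \<psi>' \<in> (Aff :: ((real^'d \<Rightarrow> real^'n) \<times> (real^'n)) set)}"
        unfolding Aff_of_def by simp
      have "set_dist (d_inf nW) (id \<circ> aff_app \<psi> \<circ> h) {id \<circ> aff_app \<psi>' \<circ> g | \<psi>'. \<psi>' \<in> (Aff :: ((real^'d \<Rightarrow> real^'n) \<times> (real^'n)) set)}
          \<le> ereal (1 * op_norm nV nW (fst \<psi>)) * aff_gap nV h g"
        by (rule gap_bound[OF assms(1,2) _ _ \<psi>(2)]) auto
      then show "set_dist (d_inf nW) f (Aff_of g) \<le> 0"
        using gap unfolding \<psi>(1) eqs by simp
    qed
    moreover have "0 \<le> d_Aff nW h g"
      unfolding d_Aff_def by (rule hausdorff_nonneg[OF assms(2) ne_Aff])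
    ultimately show "d_Aff nW h g = 0" by simp
  next
    assume "d_Aff nW h g = 0"
    then have "d_V nW lam h g \<le> 0" using P2[of h g] by simp
    moreover have "0 \<le> d_V nW lam h g"
      unfolding d_V_def by (rule hausdorff_nonneg[OF assms(2) ne_V])
    ultimately show "d_V nW lam h g = 0" by simp
  qed
  then show ?thesis using c(1) by blast
qed

end
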